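(* Let $\tau=2\pi P/Q$ and $\beta=\nu/P+Q/2\pmod 1$ ($P,Q,\nu$ integers, $Q\ge1$, $P\ne0$), and let $d$ be the integer part of $(Q+1)/2$. If $P$ and $Q$ are coprime (so that $Q=q$, $P=p$), then the $d\times d$ matrix $\mathbf G^{(d)}=\{G_{jk}\}_{1\le j,k\le d}$ is nonsingular.
   Context: Write $P/Q=p/q$ with $p,q$ coprime. $G_{jk}=\frac1Q\sum_{s=0}^{Q-1}e^{2\pi i s(j-k)/Q}a_{s+1}$ for $1\le j,k\le Q$, with $a_r=e^{-i\pi p(r+\beta-1)^2/q}$, $1\le r\le Q$. *)

theory Defs
  imports Complex_Main "Jordan_Normal_Form.Determinant"
begin

definition red_p :: "int \<Rightarrow> int \<Rightarrow> int" where
  "red_p P Q = fst (quotient_of (of_int P / of_int Q :: rat))"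
definition red_q :: "int \<Rightarrow> int \<Rightarrow> int" where
  "red_q P Q = snd (quotient_of (of_int P / of_int Q :: rat))"

definition beta :: "int \<Rightarrow> int \<Rightarrow> int \<Rightarrow> real" where
  "beta P Q \<nu> = frac (of_int \<nu> / of_int P + of_int Q / 2)"

definition a_coef :: "int \<Rightarrow> int \<Rightarrow> int \<Rightarrow> nat \<Rightarrow> complex" where
  "a_coef P Q \<nu> r = exp (- \<i> * of_real (pi * of_int (red_p P Q)
      * (of_nat r + beta P Q \<nu> - 1)^2 / of_int (red_q P Q)))"

definition G_entry :: "int \<Rightarrow> int \<Rightarrow> int \<Rightarrow> nat \<Rightarrow> nat \<Rightarrow> complex" where
  "G_entry P Q \<nu> j k = (1 / of_int Q) * (\<Sum>s<nat Q.
      exp (2 * pi * \<i> * of_nat s * (of_nat j - of_nat k) / of_int Q) * a_coef P Q \<nu> (s + 1))"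

text \<open>The d x d leading block, 1-based entries shifted to 0-based indices.\<close>
definition G_mat :: "int \<Rightarrow> int \<Rightarrow> int \<Rightarrow> nat \<Rightarrow> complex mat" where
  "G_mat P Q \<nu> d = mat d d (\<lambda>(j, k). G_entry P Q \<nu> (j + 1) (k + 1))"

end

theory Submission imports Defs "HOL-Computational_Algebra.Polynomial" begin

lemma red_pq:
  assumes "Q \<ge> 1" "coprime P Q"
  shows "red_p P Q = P" "red_q P Q = Q"
proof -
  have "quotient_of (of_int P / of_int Q :: rat) = (P, Q)"
    using assms by (simp add: Fract_of_int_quotient[symmetric] quotient_of_Fract normalize_def)
  then show "red_p P Q = P" "red_q P Q = Q" by (auto simp: red_p_def red_q_def)
qed

lemma exp_2pik: "exp (2 * of_real pi * \<i> * of_int k) = 1"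
proof -
  have "exp (2 * of_real pi * \<i> * of_int k) = cis (2 * pi * of_int k)"
    by (simp add: cis_conv_exp mult_ac)
  also have "\<dots> = 1" by (rule cis_multiple_2pi) simp
  finally show ?thesis .
qed

lemma exp_eqI: "a = b + 2 * of_real pi * \<i> * of_int k \<Longrightarrow> exp a = exp b"
  by (simp add: exp_add exp_2pik)

lemma root1:
  assumes "n > 0" "exp (2 * of_real pi * \<i> * of_int a / of_nat n) = 1"
  shows "int n dvd a"
proof -
  have "Re (exp (2 * of_real pi * \<i> * of_int a / of_nat n)) = cos (2 * pi * a / n)"
    by (simp add: Re_exp)
  with assms(2) have "cos (2 * pi * a / n) = 1" by simp
  then obtain k :: int where "2 * pi * a / n = k * 2 * pi" by (auto simp: cos_one_2pi_int)
  hence "real_of_int a = real_of_int (k * int n)" using assms(1) pi_gt_zero by (simp add: field_simps)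
  hence "a = k * int n" by (simp only: of_int_eq_iff)
  thus ?thesis by simp
qed

lemma sum_shift_periodic:
  fixes H :: "nat \<Rightarrow> complex"
  assumes "\<And>s. H (s + n) = H s"
  shows "(\<Sum>s<n. H (s + u)) = (\<Sum>s<n. H s)"
proof (induction u)
  case 0 then show ?case by simp
next
  case (Suc u)
  have "(\<Sum>s<Suc n. H (s + u)) = H u + (\<Sum>s<n. H (s + Suc u))"
    by (subst sum.lessThan_Suc_shift) simp
  moreover have "(\<Sum>s<Suc n. H (s + u)) = (\<Sum>s<n. H (s + u)) + H (n + u)"
    by simp
  moreover have "H (n + u) = H u" using assms[of u] by (simp add: add.commute)
  ultimately show ?case using Suc by simp
qed

lemma R1: fixes xp xu xt xn xs xb :: real
  assumes h1: "xn > 0" and h2: "xp*xu = xn*xt - 1"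
  shows "pi*xp*(xs+xu+xb)^2/xn = pi*xp*(2*xb*xu+xu^2)/xn - 2*pi*xs/xn + pi*xp*(xs+xb)^2/xn + 2*pi*(xs*xt)"
proof -
  have "xn*xt = 1 + xp*xu" using h2 by simp
  hence e: "pi*xn*xn*xn*xs*2*(xn*xt) = pi*xn*xn*xn*xs*2*(1+xp*xu)" by simp
  show ?thesis using h1 e by (simp add: field_simps power2_eq_square)
qed
lemma R2: fixes xp xz xn xs xb :: real
  assumes h1: "xn > 0" and h2: "xp*(2*xb+xn) = 2*xz"
  shows "pi*xp*(xs+xn+xb)^2/xn = pi*xp*(xs+xb)^2/xn + 2*pi*(xp*xs+xz)"
proof -
  have e: "pi*xn*(xp*(2*xb+xn)) = pi*xn*(2*xz)" using h2 by simp
  show ?thesis using h1 e by (simp add: field_simps power2_eq_square)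
qed

definition FF :: "int \<Rightarrow> nat \<Rightarrow> real \<Rightarrow> nat \<Rightarrow> complex" where
  "FF p n \<beta> s = exp (- \<i> * of_real (pi * of_int p * (real s + \<beta>)^2 / real n))"
definition gg :: "int \<Rightarrow> nat \<Rightarrow> real \<Rightarrow> int \<Rightarrow> complex" where
  "gg p n \<beta> m = (1 / of_nat n) * (\<Sum>s<n. exp (2 * of_real pi * \<i> * of_nat s * of_int m / of_nat n) * FF p n \<beta> s)"
definition LL :: "int \<Rightarrow> nat \<Rightarrow> real \<Rightarrow> nat \<Rightarrow> complex" where
  "LL p n \<beta> u = - \<i> * of_real (pi * of_int p * (2 * \<beta> * real u + (real u)^2) / real n)"

context
  fixes p :: int and n :: nat and \<beta> :: real and z t :: int and u :: nat
  assumes n_pos: "n > 0" and pu: "p * int u = int n * t - 1"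
    and pz: "of_int p * (2*\<beta> + real n) = 2 * of_int z"
begin

lemma FF_shift: "FF p n \<beta> (s + u) = exp (LL p n \<beta> u + 2 * of_real pi * \<i> * of_nat s / of_nat n) * FF p n \<beta> s"
proof -
  have hu: "real_of_int p * real u = real n * of_int t - 1"
    using arg_cong[OF pu, of real_of_int] by simp
  have R: "pi * of_int p * (real (s+u) + \<beta>)^2 / real n
     = pi * of_int p * (2 * \<beta> * real u + (real u)^2) / real n - 2 * pi * real s / real n
       + pi * of_int p * (real s + \<beta>)^2 / real n + 2 * pi * (real s * of_int t)"
    using R1[OF _ hu, of s \<beta>] n_pos by simp
  show ?thesis unfolding FF_def LL_def exp_add[symmetric]
    apply (rule exp_eqI[where k = "- (int s * t)"])
    apply (subst R)
    using n_pos by (simp add: field_simps)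
qed

lemma FF_periodic: "FF p n \<beta> (s + n) = FF p n \<beta> s"
proof -
  have R: "pi * of_int p * (real (s+n) + \<beta>)^2 / real n
     = pi * of_int p * (real s + \<beta>)^2 / real n + 2 * pi * (of_int p * real s + of_int z)"
    using R2[OF _ pz, of s] n_pos by simp
  show ?thesis unfolding FF_def
    apply (rule exp_eqI[where k = "- (p * int s + z)"])
    apply (subst R)
    using n_pos by (simp add: field_simps)
qed

lemma gg_step: "gg p n \<beta> (m + 1) = exp (- LL p n \<beta> u - 2 * of_real pi * \<i> * of_nat u * of_int m / of_nat n) * gg p n \<beta> m"
proof -
  define H where "H s = exp (2 * of_real pi * \<i> * of_nat s * of_int m / of_nat n) * FF p n \<beta> s" for s
  have Hper: "H (s + n) = H s" for s
  proof -
    have "exp (2 * of_real pi * \<i> * of_nat (s + n) * of_int m / of_nat n)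
        = exp (2 * of_real pi * \<i> * of_nat s * of_int m / of_nat n)"
      by (rule exp_eqI[where k = m]) (use n_pos in \<open>simp add: field_simps\<close>)
    thus ?thesis unfolding H_def using FF_periodic by simp
  qed
  have tm: "exp (2 * of_real pi * \<i> * of_nat s * of_int (m + 1) / of_nat n) * FF p n \<beta> s
     = exp (- LL p n \<beta> u - 2 * of_real pi * \<i> * of_nat u * of_int m / of_nat n) * H (s + u)" for s
  proof -
    have "exp (2 * of_real pi * \<i> * of_nat s * of_int (m + 1) / of_nat n)
      = exp (- LL p n \<beta> u - 2 * of_real pi * \<i> * of_nat u * of_int m / of_nat n)
        * exp (2 * of_real pi * \<i> * of_nat (s + u) * of_int m / of_nat n)
        * exp (LL p n \<beta> u + 2 * of_real pi * \<i> * of_nat s / of_nat n)"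
      unfolding exp_add[symmetric] by (rule arg_cong[where f = exp]) (use n_pos in \<open>simp add: field_simps\<close>)
    thus ?thesis unfolding H_def FF_shift by (simp add: mult.assoc)
  qed
  have "(\<Sum>s<n. exp (2 * of_real pi * \<i> * of_nat s * of_int (m + 1) / of_nat n) * FF p n \<beta> s)
     = exp (- LL p n \<beta> u - 2 * of_real pi * \<i> * of_nat u * of_int m / of_nat n) * (\<Sum>s<n. H (s + u))"
    unfolding tm by (simp add: sum_distrib_left)
  also have "(\<Sum>s<n. H (s + u)) = (\<Sum>s<n. H s)" by (rule sum_shift_periodic[where H = H and n = n]) (rule Hper)
  finally show ?thesis unfolding gg_def H_def by simp
qed

definition CC :: "int \<Rightarrow> complex" where
  "CC m = exp (- of_int m * LL p n \<beta> u - of_real pi * \<i> * of_nat u * of_int m * (of_int m - 1) / of_nat n)"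

lemma CC_step: "CC (m + 1) = exp (- LL p n \<beta> u - 2 * of_real pi * \<i> * of_nat u * of_int m / of_nat n) * CC m"
  unfolding CC_def exp_add[symmetric]
  by (rule arg_cong[where f = exp]) (use n_pos in \<open>simp add: field_simps\<close>)

lemma gg_closed: "gg p n \<beta> m = gg p n \<beta> 0 * CC m"
proof (induction m rule: int_induct[where k = 0])
  case base then show ?case by (simp add: CC_def)
next
  case (step1 i) then show ?case using gg_step[of i] CC_step[of i] by simp
next
  case (step2 i)
  have "gg p n \<beta> i = exp (- LL p n \<beta> u - 2 * of_real pi * \<i> * of_nat u * of_int (i - 1) / of_nat n) * gg p n \<beta> (i - 1)"
    using gg_step[of "i - 1"] by simp
  moreover have "CC i = exp (- LL p n \<beta> u - 2 * of_real pi * \<i> * of_nat u * of_int (i - 1) / of_nat n) * CC (i - 1)"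
    using CC_step[of "i - 1"] by simp
  ultimately show ?case using step2 by (simp add: mult.left_commute)
qed

lemma root_sum: "s < n \<Longrightarrow> (\<Sum>m<n. exp (2 * of_real pi * \<i> * of_nat s * of_nat m / of_nat n)) = (if s = 0 then of_nat n else 0)"
proof -
  assume sn: "s < n"
  define x where "x = exp (2 * of_real pi * \<i> * of_nat s / of_nat n)"
  have e: "exp (2 * of_real pi * \<i> * of_nat s * of_nat m / of_nat n) = x ^ m" for m
    unfolding x_def exp_of_nat_mult[symmetric] by (rule arg_cong[where f = exp]) simp
  show ?thesis
  proof (cases "s = 0")
    case True then show ?thesis by simp
  next
    case False
    have "x \<noteq> 1"
    proof
      assume "x = 1"
      hence "int n dvd int s" using root1[OF n_pos, of "int s"] unfolding x_def by simp
      hence "n dvd s" by simp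
      with False sn show False by (auto dest: dvd_imp_le)
    qed
    moreover have "x ^ n = 1"
    proof -
      have "x ^ n = exp (2 * of_real pi * \<i> * of_int (int s))"
        unfolding x_def exp_of_nat_mult[symmetric] by (rule arg_cong[where f = exp]) (use n_pos in simp)
      also have "\<dots> = 1" by (rule exp_2pik)
      finally show ?thesis .
    qed
    ultimately show ?thesis unfolding e using False by (simp add: sum_gp_strict)
  qed
qed

lemma gg0_ne: "gg p n \<beta> 0 \<noteq> 0"
proof
  assume g0: "gg p n \<beta> 0 = 0"
  define E where "E s m = exp (2 * of_real pi * \<i> * of_nat s * of_int (int m) / of_nat n)" for s m
  have "(\<Sum>m<n. gg p n \<beta> (int m)) = (1 / of_nat n) * (\<Sum>m<n. \<Sum>s<n. E s m * FF p n \<beta> s)"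
    unfolding gg_def E_def by (simp add: sum_distrib_left)
  also have "(\<Sum>m<n. \<Sum>s<n. E s m * FF p n \<beta> s) = (\<Sum>s<n. \<Sum>m<n. E s m * FF p n \<beta> s)"
    by (rule sum.swap)
  also have "\<dots> = (\<Sum>s<n. (\<Sum>m<n. E s m) * FF p n \<beta> s)"
    by (rule sum.cong) (simp_all add: sum_distrib_right)
  also have "\<dots> = (\<Sum>s<n. if s = 0 then of_nat n * FF p n \<beta> s else 0)"
    by (rule sum.cong) (simp_all add: root_sum E_def)
  also have "\<dots> = of_nat n * FF p n \<beta> 0" using n_pos by simp
  finally have "(\<Sum>m<n. gg p n \<beta> (int m)) = 1 / of_nat n * (of_nat n * FF p n \<beta> 0)" .
  moreover have "gg p n \<beta> m = 0" for m using gg_closed[of m] g0 by simp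
  ultimately have "FF p n \<beta> 0 = 0" using n_pos by simp
  thus False unfolding FF_def by simp
qed

definition RR :: "nat \<Rightarrow> complex" where
  "RR j = exp (- of_nat j * LL p n \<beta> u - of_real pi * \<i> * of_nat u * of_nat j * (of_nat j - 1) / of_nat n)"
definition SS :: "nat \<Rightarrow> complex" where
  "SS k = exp (of_nat k * LL p n \<beta> u - of_real pi * \<i> * of_nat u * of_nat k * (of_nat k + 1) / of_nat n)"
definition ZZ :: "nat \<Rightarrow> complex" where
  "ZZ j = exp (2 * of_real pi * \<i> * of_nat u * of_nat j / of_nat n)"

lemma gg_entry: "gg p n \<beta> (int j - int k) = gg p n \<beta> 0 * RR j * SS k * ZZ j ^ k"
proof -
  have "CC (int j - int k) = RR j * SS k * ZZ j ^ k"
    unfolding CC_def RR_def SS_def ZZ_def exp_of_nat_mult[symmetric] exp_add[symmetric]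
    by (rule arg_cong[where f = exp]) (use n_pos in \<open>simp add: field_simps\<close>)
  thus ?thesis using gg_closed[of "int j - int k"] by (simp add: mult.assoc)
qed

lemma ZZ_inj: "d \<le> n \<Longrightarrow> inj_on ZZ {..<d}"
proof (rule inj_onI)
  fix a b assume d: "d \<le> n" and a: "a \<in> {..<d}" and b: "b \<in> {..<d}" and eq: "ZZ a = ZZ b"
  have "exp (2 * of_real pi * \<i> * of_int (int u * (int a - int b)) / of_nat n) = 1"
  proof -
    have "ZZ a = exp (2 * of_real pi * \<i> * of_int (int u * (int a - int b)) / of_nat n) * ZZ b"
      unfolding ZZ_def exp_add[symmetric]
      by (rule arg_cong[where f = exp]) (use n_pos in \<open>simp add: field_simps\<close>)
    with eq show ?thesis unfolding ZZ_def by simp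
  qed
  hence dv: "int n dvd int u * (int a - int b)" by (rule root1[OF n_pos])
  define x where "x = int a - int b"
  have "int n dvd p * (int u * x)" using dv unfolding x_def by (rule dvd_mult)
  moreover have "p * (int u * x) = int n * (t * x) - x"
  proof -
    have "p * (int u * x) = (p * int u) * x" by (simp add: mult.assoc)
    also have "\<dots> = (int n * t - 1) * x" by (simp add: pu)
    finally show ?thesis by (simp add: algebra_simps)
  qed
  ultimately have "int n dvd (int n * (t * x) - x)" by simp
  hence "int n dvd (int n * (t * x) - (int n * (t * x) - x))"
    by (rule dvd_diff[OF dvd_triv_left])
  hence "int n dvd x" by simp
  then obtain c where c: "x = int n * c" by (auto elim: dvdE)
  have "\<bar>x\<bar> < int n" using a b d unfolding x_def by auto
  have "c = 0"
  proof (rule ccontr)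
    assume "c \<noteq> 0"
    hence "1 \<le> \<bar>c\<bar>" by simp
    hence "int n * 1 \<le> int n * \<bar>c\<bar>" by (rule mult_left_mono) simp
    hence "int n \<le> \<bar>x\<bar>" unfolding c by (simp add: abs_mult)
    with \<open>\<bar>x\<bar> < int n\<close> show False by simp
  qed
  thus "a = b" using c unfolding x_def by simp
qed

lemma det_ne: assumes d: "d \<le> n"
  shows "det (mat d d (\<lambda>(j,k). gg p n \<beta> (int j - int k))) \<noteq> 0"
proof
  define M where "M = mat d d (\<lambda>(j,k). gg p n \<beta> (int j - int k))"
  assume "det (mat d d (\<lambda>(j,k). gg p n \<beta> (int j - int k))) = 0"
  hence det0: "det M = 0" unfolding M_def .
  have M: "M \<in> carrier_mat d d" by (simp add: M_def)
  obtain v where v: "v \<in> carrier_vec d" "v \<noteq> 0\<^sub>v d" "M *\<^sub>v v = 0\<^sub>v d"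
    using det_0_iff_vec_prod_zero_field[OF M] det0 by blast
  define w where "w k = SS k * v $ k" for k
  define PP where "PP = (\<Sum>k<d. monom (w k) k)"
  have root: "poly PP (ZZ j) = 0" if j: "j < d" for j
  proof -
    have "0 = (M *\<^sub>v v) $ j" using v(3) j by simp
    also have "\<dots> = (\<Sum>k<d. M $$ (j,k) * v $ k)"
      using j v(1) M by (simp add: scalar_prod_def atLeast0LessThan row_def)
    also have "\<dots> = (\<Sum>k<d. (gg p n \<beta> 0 * RR j) * (w k * ZZ j ^ k))"
      by (rule sum.cong) (use j in \<open>simp_all add: M_def w_def gg_entry mult_ac\<close>)
    also have "\<dots> = (gg p n \<beta> 0 * RR j) * poly PP (ZZ j)"
      by (simp add: PP_def poly_sum poly_monom sum_distrib_left)
    finally have "(gg p n \<beta> 0 * RR j) * poly PP (ZZ j) = 0" by simp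
    moreover have "gg p n \<beta> 0 * RR j \<noteq> 0" using gg0_ne by (simp add: RR_def)
    ultimately show ?thesis by simp
  qed
  have P0: "PP = 0"
  proof (rule ccontr)
    assume P: "PP \<noteq> 0"
    have dpos: "d > 0"
    proof (rule ccontr)
      assume "\<not> d > 0" hence "d = 0" by simp
      hence "PP = 0" unfolding PP_def by simp
      with P show False by simp
    qed
    have "ZZ ` {..<d} \<subseteq> {x. poly PP x = 0}" using root by auto
    hence "card (ZZ ` {..<d}) \<le> card {x. poly PP x = 0}"
      by (rule card_mono[OF poly_roots_finite[OF P]])
    also have "\<dots> \<le> degree PP" by (rule card_poly_roots_bound[OF P])
    also have "degree PP \<le> d - 1" unfolding PP_def
      by (rule degree_sum_le) (auto intro: order.trans[OF degree_monom_le])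
    finally have "d \<le> d - 1" using card_image[OF ZZ_inj[OF d]] by simp
    with dpos show False by simp
  qed
  have "v $ k = 0" if k: "k < d" for k
  proof -
    have "coeff PP k = w k" using k unfolding PP_def by (simp add: coeff_sum coeff_monom)
    hence "w k = 0" using P0 by simp
    moreover have "SS k \<noteq> 0" by (simp add: SS_def)
    ultimately show ?thesis unfolding w_def by simp
  qed
  hence "v = 0\<^sub>v d" using v(1) by (intro eq_vecI) auto
  with v(2) show False by simp
qed

end

theorem lemma2:
  fixes P Q \<nu> :: int
  assumes "Q \<ge> 1" and "P \<noteq> 0" and "coprime P Q"
  shows "det (G_mat P Q \<nu> (nat ((Q + 1) div 2))) \<noteq> 0"
proof -
  define n where "n = nat Q"
  define d where "d = nat ((Q + 1) div 2)"
  define b where "b = beta P Q \<nu>"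
  have n_pos: "n > 0" and Qn: "Q = int n" using assms(1) by (auto simp: n_def)
  have dn: "d \<le> n" using assms(1) by (simp add: d_def n_def)
  obtain x0 y0 where xy: "x0 * P + y0 * Q = 1"
    using bezout_int[of P Q] assms(3) by (auto simp: coprime_iff_gcd_eq_1)
  define u where "u = nat ((- x0) mod Q)"
  define t where "t = y0 - P * ((- x0) div Q)"
  have u_eq: "int u = (- x0) mod Q" using assms(1) by (simp add: u_def)
  have pu: "P * int u = int n * t - 1"
  proof -
    have h: "(- x0) mod Q = - x0 - Q * ((- x0) div Q)" by (simp add: minus_div_mult_eq_mod[symmetric] mult.commute)
    have "P * int u = P * (- x0 - Q * ((- x0) div Q))" by (simp only: u_eq h)
    also have "\<dots> = P * (- x0) - P * Q * ((- x0) div Q)" by (simp add: algebra_simps)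
    also have "P * (- x0) = y0 * Q - 1" using xy by (simp add: algebra_simps)
    finally show ?thesis by (simp add: t_def Qn algebra_simps)
  qed
  define z where "z = \<nu> + P * Q - P * \<lfloor>of_int \<nu> / of_int P + of_int Q / 2 :: real\<rfloor>"
  have pz: "of_int P * (2 * b + real n) = 2 * of_int z"
    using assms(2) unfolding b_def beta_def frac_def z_def by (simp add: Qn field_simps)
  have red: "red_p P Q = P" "red_q P Q = Q" using red_pq[OF assms(1) assms(3)] by auto
  have "G_mat P Q \<nu> d = mat d d (\<lambda>(j,k). gg P n b (int j - int k))"
  proof (rule eq_matI)
    fix j k assume j: "j < dim_row (mat d d (\<lambda>(j,k). gg P n b (int j - int k)))"
      and k: "k < dim_col (mat d d (\<lambda>(j,k). gg P n b (int j - int k)))"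
    have "G_entry P Q \<nu> (j + 1) (k + 1) = gg P n b (int j - int k)"
      unfolding G_entry_def gg_def a_coef_def FF_def red b_def
      by (simp add: Qn algebra_simps)
    thus "G_mat P Q \<nu> d $$ (j, k) = mat d d (\<lambda>(j,k). gg P n b (int j - int k)) $$ (j, k)"
      using j k by (simp add: G_mat_def)
  qed (auto simp: G_mat_def)
  also have "det \<dots> \<noteq> 0" by (rule det_ne[OF n_pos pu pz dn])
  finally show ?thesis unfolding d_def .
qed

end
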